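(* Let $A$ be a bivariate copula and $K_A$ a version of its Markov kernel such that the function $(x,y)\mapsto K_A(x,[0,y])$ on $[0,1]^2$ has a discontinuity. Then the sequence $(\Delta_N)_{N\in\mathbb{N}}$ given by $$\Delta_N:=\sup_{(x,y)\in[0,1]^2}\left|K_{\mathcal{B}_N(A)}(x,[0,y])-K_A(x,[0,y])\right|$$ does not converge to $0$ as $N\to\infty$.
   Context: A (bivariate) copula is a distribution function on $[0,1]^2$ with uniform marginals; each copula $B$ corresponds to a doubly stochastic measure $\mu_B$ with $B(x,y)=\mu_B([0,x]\times[0,y])$. A Markov kernel of $B$ is a map $K_B:[0,1]\times\mathcal{B}([0,1])\to[0,1]$, measurable in the first argument, a probability measure in the second, with $\int_{E_1}K_B(x,E_2)\,d\lambda(x)=\mu_B(E_1\times E_2)$ for all Borel $E_1,E_2$ ($\lambda$ = Lebesgue measure). Bernstein approximation: $p_{N,k}(u)=\binom Nk u^k(1-u)^{N-k}$ for $k\in\{0,\dots,N\}$ and $p_{N,k}\equiv0$ otherwise; $\mathcal{B}_N(A)(x,y)=\sum_{i,j=1}^N A(\tfrac iN,\tfrac jN)p_{N,i}(x)p_{N,j}(y)$, with Markov kernel version $K_{\mathcal{B}_N(A)}(x,[0,y])=N\sum_{i,j=1}^N A(\tfrac iN,\tfrac jN)\big(p_{N-1,i-1}(x)-p_{N-1,i}(x)\big)p_{N,j}(y)$. *)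

theory Defs
  imports "HOL-Probability.Probability"
begin

definition is_copula :: "(real \<Rightarrow> real \<Rightarrow> real) \<Rightarrow> bool" where
  "is_copula A \<longleftrightarrow>
     (\<forall>x\<in>{0..1}. A x 0 = 0 \<and> A 0 x = 0 \<and> A x 1 = x \<and> A 1 x = x) \<and>
     (\<forall>x1\<in>{0..1}. \<forall>x2\<in>{0..1}. \<forall>y1\<in>{0..1}. \<forall>y2\<in>{0..1}.
        x1 \<le> x2 \<longrightarrow> y1 \<le> y2 \<longrightarrow> A x2 y2 - A x1 y2 - A x2 y1 + A x1 y1 \<ge> 0)"

abbreviation unit_borel :: "real measure" where
  "unit_borel \<equiv> restrict_space borel {0..1}"

definition is_measure_of_copula :: "(real \<Rightarrow> real \<Rightarrow> real) \<Rightarrow> (real \<times> real) measure \<Rightarrow> bool" where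
  "is_measure_of_copula A \<mu> \<longleftrightarrow>
     sets \<mu> = sets (restrict_space borel ({0..1} \<times> {0..1})) \<and>
     (\<forall>x\<in>{0..1}. \<forall>y\<in>{0..1}. emeasure \<mu> ({0..x} \<times> {0..y}) = ennreal (A x y))"

definition is_markov_kernel_of :: "(real \<Rightarrow> real \<Rightarrow> real) \<Rightarrow> (real \<Rightarrow> real set \<Rightarrow> real) \<Rightarrow> bool" where
  "is_markov_kernel_of A K \<longleftrightarrow>
     (\<forall>x\<in>{0..1}. \<exists>P. prob_space P \<and> sets P = sets unit_borel \<and>
                       (\<forall>E\<in>sets unit_borel. K x E = measure P E)) \<and>
     (\<forall>E\<in>sets unit_borel. (\<lambda>x. K x E) \<in> borel_measurable unit_borel) \<and>
     (\<exists>\<mu>. is_measure_of_copula A \<mu> \<and>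
        (\<forall>E1\<in>sets unit_borel. \<forall>E2\<in>sets unit_borel.
           (LINT x:E1|lborel. K x E2) = measure \<mu> (E1 \<times> E2)))"

definition bern :: "nat \<Rightarrow> nat \<Rightarrow> real \<Rightarrow> real" where
  "bern N k u = (if k \<le> N then real (N choose k) * u ^ k * (1 - u) ^ (N - k) else 0)"

text \<open>Markov kernel K_{B_N(A)}(x,[0,y]) of the Bernstein approximation.\<close>
definition bernstein_kernel :: "(real \<Rightarrow> real \<Rightarrow> real) \<Rightarrow> nat \<Rightarrow> real \<Rightarrow> real \<Rightarrow> real" where
  "bernstein_kernel A N x y =
     real N * (\<Sum>i=1..N. \<Sum>j=1..N. A (real i / real N) (real j / real N) *
        (bern (N - 1) (i - 1) x - bern (N - 1) i x) * bern N j y)"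

end

theory Submission
  imports Defs
begin

lemma bern_cont:
  assumes "continuous_on S f"
  shows "continuous_on S (\<lambda>p. bern n k (f p))"
  unfolding bern_def by (cases "k \<le> n") (auto intro!: continuous_intros assms)

lemma bk_cont: "continuous_on S (\<lambda>(x::real, y::real). bernstein_kernel A N x y)"
proof -
  have "continuous_on S (\<lambda>p. bernstein_kernel A N (fst p) (snd p))"
    unfolding bernstein_kernel_def
    by (intro continuous_intros bern_cont continuous_on_fst continuous_on_snd continuous_on_id)
  then show ?thesis by (simp add: case_prod_beta)
qed

lemma K_bound:
  assumes "is_markov_kernel_of A K" "x \<in> {0..1}" "y \<in> {0..1::real}"
  shows "\<bar>K x {0..y}\<bar> \<le> 1"
proof -
  obtain P where P: "prob_space P" "sets P = sets unit_borel"
    "\<And>E. E \<in> sets unit_borel \<Longrightarrow> K x E = measure P E"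
    using assms(1,2) unfolding is_markov_kernel_of_def by blast
  have "{0..y} = {0..1} \<inter> {0..y}" using assms(3) by auto
  hence "{0..y} \<in> sets unit_borel" unfolding sets_restrict_space
    by (metis atLeastAtMost_borel image_eqI)
  hence "K x {0..y} = measure P {0..y}" using P by blast
  moreover have "measure P {0..y} \<le> 1" using P(1) by (simp add: prob_space.prob_le_1)
  ultimately show ?thesis by simp
qed

theorem proposition4p4:
  fixes A :: "real \<Rightarrow> real \<Rightarrow> real" and K :: "real \<Rightarrow> real set \<Rightarrow> real"
  assumes "is_copula A"
    and "is_markov_kernel_of A K"
    and "\<not> continuous_on ({0..1} \<times> {0..1}) (\<lambda>(x, y). K x {0..y})"
  shows "\<not> ((\<lambda>N. SUP (x, y)\<in>{0..1} \<times> {0..1}. \<bar>bernstein_kernel A N x y - K x {0..y}\<bar>)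
            \<longlonglongrightarrow> 0)"
proof
  define S where "S = ({0..1::real} \<times> {0..1::real})"
  define f where "f = (\<lambda>N (x, y). bernstein_kernel A N x y)"
  assume lim: "(\<lambda>N. SUP (x, y)\<in>{0..1} \<times> {0..1}. \<bar>bernstein_kernel A N x y - K x {0..y}\<bar>)
            \<longlonglongrightarrow> 0"
  have bdd: "bdd_above ((\<lambda>(x, y). \<bar>bernstein_kernel A N x y - K x {0..y}\<bar>) ` S)" for N
  proof -
    have "compact (f N ` S)" unfolding S_def f_def
      by (intro compact_continuous_image bk_cont compact_Times compact_Icc)
    then obtain B where B: "\<And>z. z \<in> f N ` S \<Longrightarrow> norm z \<le> B"
      using compact_imp_bounded bounded_iff by metis
    show ?thesis
    proof (rule bdd_aboveI2)
      fix p assume "p \<in> S"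
      then obtain x y where p: "p = (x, y)" "x \<in> {0..1}" "y \<in> {0..1}" unfolding S_def by auto
      have "\<bar>bernstein_kernel A N x y\<bar> \<le> B" using B[of "f N p"] \<open>p \<in> S\<close> p unfolding f_def by auto
      moreover have "\<bar>K x {0..y}\<bar> \<le> 1" using K_bound assms(2) p by blast
      ultimately show "(\<lambda>(x, y). \<bar>bernstein_kernel A N x y - K x {0..y}\<bar>) p \<le> B + 1"
        using p by auto
    qed
  qed
  have "uniform_limit S f (\<lambda>(x, y). K x {0..y}) sequentially"
    unfolding uniform_limit_iff
  proof (intro allI impI)
    fix e :: real assume "e > 0"
    from lim[THEN order_tendstoD(2), OF this]
    show "\<forall>\<^sub>F n in sequentially. \<forall>p\<in>S. dist (f n p) ((\<lambda>(x, y). K x {0..y}) p) < e"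
    proof eventually_elim
      case (elim N)
      show ?case
      proof
        fix p assume "p \<in> S"
        then obtain x y where p: "p = (x, y)" by (cases p)
        have "(\<lambda>(x, y). \<bar>bernstein_kernel A N x y - K x {0..y}\<bar>) p
              \<le> (SUP (x, y)\<in>S. \<bar>bernstein_kernel A N x y - K x {0..y}\<bar>)"
          by (rule cSUP_upper[OF \<open>p \<in> S\<close> bdd])
        with elim show "dist (f N p) ((\<lambda>(x, y). K x {0..y}) p) < e"
          unfolding S_def f_def p dist_real_def by (simp add: S_def)
      qed
    qed
  qed
  moreover have "\<forall>\<^sub>F n in sequentially. continuous_on S (f n)"
    unfolding f_def by (simp add: bk_cont)
  ultimately have "continuous_on S (\<lambda>(x, y). K x {0..y})"
    using uniform_limit_theorem by (metis trivial_limit_sequentially)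
  with assms(3) show False unfolding S_def by simp
qed

end
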